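(* Let $k\ge1$ and let $a\ge b\ge0$ be integers with $a+b\le k$. Then $\mathcal{R}^k_{(a,b),(b,a)}=T_1\cup T_2\cup T_3\cup T_4\cup T_5$, and the sets $T_1,\dots,T_5$ are pairwise disjoint. Moreover: - for every weight of the form $(p-2l,p+l)$ or $(p+l,p-2l)$ in $T_1\cup T_2\cup T_3$ (with $p,l$ as in the defining parametrization), $$N^{(k)(p-2l,p+l)}_{(a,b),(b,a)}=N^{(k)(p+l,p-2l)}_{(a,b),(b,a)}=M(p,l);$$ - for every $(p,p)\in T_4\cup T_5$, $N^{(k)(p,p)}_{(a,b),(b,a)}=M(p,0)$, where $$M(p,l)=\min(k,a+b+p-l)-a-b+l-\max(p-b,l)-\max(p-a,l)+1 .$$
   Context: $\widehat{\mathfrak{su}}(3)_k$ fusion. Fix an integer $k\ge1$ and let $P_+^k=\{(\lambda_1,\lambda_2)\in\mathbb{Z}_{\ge0}^2:\lambda_1+\lambda_2\le k\}$. For $\lambda,\mu,\nu\in P_+^k$ set - $\mathcal{A}=\tfrac13[2(\lambda_1+\mu_1+\nu_2)+\lambda_2+\mu_2+\nu_1]$, - $\mathcal{B}=\tfrac13[\lambda_1+\mu_1+\nu_2+2(\lambda_2+\mu_2+\nu_1)]$, - $k_0^{\max}=\min(\mathcal{A},\mathcal{B})$, - $k_0^{\min}=\max(\lambda_1+\lambda_2,\mu_1+\mu_2,\nu_1+\nu_2,\mathcal{A}-\lambda_1,\mathcal{A}-\mu_1,\mathcal{A}-\nu_2,\mathcal{B}-\lambda_2,\mathcal{B}-\mu_2,\mathcal{B}-\nu_1)$.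 The fusion multiplicity is $N^{(k)\nu}_{\lambda,\mu}=\min(k_0^{\max},k)-k_0^{\min}+1$ if $\mathcal{A},\mathcal{B}$ are nonnegative integers, $k_0^{\max}\ge k_0^{\min}$ and $k\ge k_0^{\min}$; otherwise it is $0$. The set $\mathcal{R}^k_{\lambda,\mu}$ is $\{\nu\in P_+^k:N^{(k)\nu}_{\lambda,\mu}\ne0\}$. In the definitions below, $p,l$ range over integers, and each set is empty unless its stated condition holds. - If $b\ge2$ and $k\ge2a+3$: $T_1=\{(p-2l,p+l),(p+l,p-2l):a+2\le p\le\min(a+b,k-a-1,\lfloor2k/3\rfloor,\lfloor(b+k)/2\rfloor),\ \max(1,2p-k)\le l\le\min(p-a-1,\lfloor p/2\rfloor,b)\}$. - If $b\ge1$ and $k\ge a+b+1$: $T_2=\{(p-2l,p+l),(p+l,p-2l):b+1\le p\le\min(a+b,k-a),\ \max(1,p-a)\le l\le\min(p-b,\lfloor p/2\rfloor,b)\}$. - If $b\ge2$ and $k\ge a+b+1$: $T_3=\{(p-2l,p+l),(p+l,p-2l):2\le p\le\min(k-a-1,2b-2),\ \max(1,p-b+1)\le l\le\min(k-a-b,\lfloor p/2\rfloor,b)\}$. - $T_4=\{(p,p):0\le p\le\min(a,k-a)\}$. - If $k\ge2a+2$: $T_5=\{(p,p):a+1\le p\le\min(a+b,\lfloor k/2\rfloor)\}$. *)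

theory Defs
  imports Main "HOL-Library.Disjoint_Sets" Complex_Main
begin

type_synonym weight = "int \<times> int"

text \<open>Dominant weights of affine su(3) at level k.\<close>
definition Pplus :: "int \<Rightarrow> weight set" where
  "Pplus k = {(l1, l2). l1 \<ge> 0 \<and> l2 \<ge> 0 \<and> l1 + l2 \<le> k}"

definition calA :: "weight \<Rightarrow> weight \<Rightarrow> weight \<Rightarrow> rat" where
  "calA lam mu nu = (2 * of_int (fst lam + fst mu + snd nu) + of_int (snd lam + snd mu + fst nu)) / 3"

definition calB :: "weight \<Rightarrow> weight \<Rightarrow> weight \<Rightarrow> rat" where
  "calB lam mu nu = (of_int (fst lam + fst mu + snd nu) + 2 * of_int (snd lam + snd mu + fst nu)) / 3"

definition k0max :: "weight \<Rightarrow> weight \<Rightarrow> weight \<Rightarrow> rat" where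
  "k0max lam mu nu = min (calA lam mu nu) (calB lam mu nu)"

definition k0min :: "weight \<Rightarrow> weight \<Rightarrow> weight \<Rightarrow> rat" where
  "k0min lam mu nu = (let A = calA lam mu nu; B = calB lam mu nu in
     Max {of_int (fst lam + snd lam), of_int (fst mu + snd mu), of_int (fst nu + snd nu),
          A - of_int (fst lam), A - of_int (fst mu), A - of_int (snd nu),
          B - of_int (snd lam), B - of_int (snd mu), B - of_int (fst nu)})"

definition fusion_mult :: "int \<Rightarrow> weight \<Rightarrow> weight \<Rightarrow> weight \<Rightarrow> rat" where
  "fusion_mult k lam mu nu =
    (let A = calA lam mu nu; B = calB lam mu nu; kmax = k0max lam mu nu; kmin = k0min lam mu nu in
     if A \<in> \<int> \<and> B \<in> \<int> \<and> A \<ge> 0 \<and> B \<ge> 0 \<and> kmax \<ge> kmin \<and> of_int k \<ge> kmin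
     then min kmax (of_int k) - kmin + 1 else 0)"

definition fusion_range :: "int \<Rightarrow> weight \<Rightarrow> weight \<Rightarrow> weight set" where
  "fusion_range k lam mu = {nu \<in> Pplus k. fusion_mult k lam mu nu \<noteq> 0}"

definition Par1 :: "int \<Rightarrow> int \<Rightarrow> int \<Rightarrow> (int \<times> int) set" where
  "Par1 k a b = (if b \<ge> 2 \<and> k \<ge> 2*a + 3 then
     {(p, l). a + 2 \<le> p \<and> p \<le> min (min (a + b) (k - a - 1)) (min ((2*k) div 3) ((b + k) div 2))
        \<and> max 1 (2*p - k) \<le> l \<and> l \<le> min (min (p - a - 1) (p div 2)) b}
     else {})"

definition Par2 :: "int \<Rightarrow> int \<Rightarrow> int \<Rightarrow> (int \<times> int) set" where
  "Par2 k a b = (if b \<ge> 1 \<and> k \<ge> a + b + 1 then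
     {(p, l). b + 1 \<le> p \<and> p \<le> min (a + b) (k - a)
        \<and> max 1 (p - a) \<le> l \<and> l \<le> min (min (p - b) (p div 2)) b}
     else {})"

definition Par3 :: "int \<Rightarrow> int \<Rightarrow> int \<Rightarrow> (int \<times> int) set" where
  "Par3 k a b = (if b \<ge> 2 \<and> k \<ge> a + b + 1 then
     {(p, l). 2 \<le> p \<and> p \<le> min (k - a - 1) (2*b - 2)
        \<and> max 1 (p - b + 1) \<le> l \<and> l \<le> min (min (k - a - b) (p div 2)) b}
     else {})"

definition Par4 :: "int \<Rightarrow> int \<Rightarrow> int \<Rightarrow> int set" where
  "Par4 k a b = {p. 0 \<le> p \<and> p \<le> min a (k - a)}"

definition Par5 :: "int \<Rightarrow> int \<Rightarrow> int \<Rightarrow> int set" where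
  "Par5 k a b = (if k \<ge> 2*a + 2 then {p. a + 1 \<le> p \<and> p \<le> min (a + b) (k div 2)} else {})"

definition Tpair :: "(int \<times> int) set \<Rightarrow> weight set" where
  "Tpair P = {(p - 2*l, p + l) | p l. (p, l) \<in> P} \<union> {(p + l, p - 2*l) | p l. (p, l) \<in> P}"

definition Tdiag :: "int set \<Rightarrow> weight set" where
  "Tdiag P = {(p, p) | p. p \<in> P}"

definition T1 where "T1 k a b = Tpair (Par1 k a b)"
definition T2 where "T2 k a b = Tpair (Par2 k a b)"
definition T3 where "T3 k a b = Tpair (Par3 k a b)"
definition T4 where "T4 k a b = Tdiag (Par4 k a b)"
definition T5 where "T5 k a b = Tdiag (Par5 k a b)"

definition Tfam :: "int \<Rightarrow> int \<Rightarrow> int \<Rightarrow> nat \<Rightarrow> weight set" where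
  "Tfam k a b i = (if i = 1 then T1 k a b else if i = 2 then T2 k a b else
     if i = 3 then T3 k a b else if i = 4 then T4 k a b else T5 k a b)"

definition Mfun :: "int \<Rightarrow> int \<Rightarrow> int \<Rightarrow> int \<Rightarrow> int \<Rightarrow> int" where
  "Mfun k a b p l = min k (a + b + p - l) - a - b + l - max (p - b) l - max (p - a) l + 1"

end

theory Submission imports Defs begin

definition kmn :: "int\<Rightarrow>int\<Rightarrow>int\<Rightarrow>int\<Rightarrow>int" where
 "kmn a b p l = max (a+b) (max (b+a) (max ((p-2*l)+(p+l)) (max (a+b+p-a) (max (a+b+p-b) (max (a+b+p-(p+l))
     (max (a+b+p-l-b) (max (a+b+p-l-a) (a+b+p-l-(p-2*l)))))))))"

definition G :: "int\<Rightarrow>int\<Rightarrow>int\<Rightarrow>int\<Rightarrow>int\<Rightarrow>int" where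
 "G k a b p l = (let A = a+b+p; B = a+b+p-l; kmax = min A B; kmin = kmn a b p l
   in if A \<ge> 0 \<and> B \<ge> 0 \<and> kmax \<ge> kmin \<and> k \<ge> kmin then min kmax k - kmin + 1 else 0)"

lemma calA_eq: "calA (a,b) (b,a) (p-2*l, p+l) = of_int (a+b+p)"
  by (simp add: calA_def field_simps)
lemma calB_eq: "calB (a,b) (b,a) (p-2*l, p+l) = of_int (a+b+p-l)"
  by (simp add: calB_def field_simps)

lemma k0min_eq: "k0min (a,b) (b,a) (p-2*l, p+l) = of_int (kmn a b p l)"
  unfolding k0min_def Let_def calA_eq calB_eq kmn_def
  by (simp only: of_int_max of_int_diff fst_conv snd_conv Max_insert finite.intros insert_not_empty Max_singleton simp_thms)

lemma gen_of_int: "(if (of_int X::rat) \<in> \<int> \<and> (of_int Y::rat) \<in> \<int> \<and> of_int X \<ge> (0::rat) \<and> of_int Y \<ge> (0::rat) \<and> min (of_int X) (of_int Y) \<ge> (of_int m::rat) \<and> (of_int k::rat) \<ge> of_int m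
     then min (min (of_int X) (of_int Y)) (of_int k) - of_int m + 1 else (0::rat)) =
   of_int (if X \<ge> 0 \<and> Y \<ge> 0 \<and> min X Y \<ge> m \<and> k \<ge> m then min (min X Y) k - m + 1 else 0)"
  by (simp add: of_int_min)

lemma fm_eq: "fusion_mult k (a,b) (b,a) (p-2*l, p+l) = of_int (G k a b p l)"
  unfolding fusion_mult_def G_def Let_def k0max_def calA_eq calB_eq k0min_eq
  by (rule gen_of_int)



lemma kmn_pos: assumes "l \<ge> 0" "a \<ge> b"
  shows "kmn a b p l = max (a+b+l) (max (2*p-l) (a+p))"
proof -
  define M where "M = max (a+b+l) (max (2*p-l) (a+p))"
  have m1: "a+b+l \<le> M" "2*p-l \<le> M" "a+p \<le> M" by (simp_all add: M_def)
  have k1: "a+b+p-l-(p-2*l) \<le> kmn a b p l"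
    unfolding kmn_def by (rule max.coboundedI2)+ simp
  have k2: "(p-2*l)+(p+l) \<le> kmn a b p l"
    unfolding kmn_def by (rule max.coboundedI2, rule max.coboundedI2, rule max.cobounded1)
  have k3: "a+b+p-b \<le> kmn a b p l"
    unfolding kmn_def by (rule max.coboundedI2, rule max.coboundedI2, rule max.coboundedI2, rule max.coboundedI2, rule max.cobounded1)
  have "kmn a b p l \<le> M" unfolding kmn_def max.bounded_iff using m1 assms by linarith
  moreover have "M \<le> kmn a b p l" unfolding M_def max.bounded_iff using k1 k2 k3 by linarith
  ultimately show ?thesis unfolding M_def by simp
qed

lemma G_pos: assumes "l \<ge> 0" "a \<ge> b"
  shows "G k a b p l = (let m = max (a+b+l) (max (2*p-l) (a+p)) in
      if 0 \<le> a+b+p-l \<and> m \<le> a+b+p-l \<and> m \<le> k then min (a+b+p-l) k - m + 1 else 0)"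
proof -
  have "min (a+b+p) (a+b+p-l) = a+b+p-l" using assms by simp
  then show ?thesis unfolding G_def Let_def kmn_pos[OF assms] using assms by auto
qed

lemma G_nz_pos: assumes "l \<ge> 0" "a \<ge> b" "b \<ge> 0"
  shows "G k a b p l \<noteq> 0 \<longleftrightarrow> 2*l \<le> p \<and> p \<le> a+b \<and> l \<le> b \<and> a+b+l \<le> k \<and> 2*p-l \<le> k \<and> a+p \<le> k"
proof -
  define m where "m = max (a+b+l) (max (2*p-l) (a+p))"
  have e: "(m \<le> a+b+p-l \<and> m \<le> k) \<longleftrightarrow> 2*l \<le> p \<and> p \<le> a+b \<and> l \<le> b \<and> a+b+l \<le> k \<and> 2*p-l \<le> k \<and> a+p \<le> k"
    unfolding m_def max.bounded_iff by linarith
  have "m \<le> a+b+p-l \<Longrightarrow> m \<le> k \<Longrightarrow> min (a+b+p-l) k - m + 1 > 0" by simp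
  moreover have "m \<le> a+b+p-l \<Longrightarrow> 0 \<le> a+b+p-l" using assms unfolding m_def max.bounded_iff by linarith
  ultimately show ?thesis unfolding G_pos[OF assms(1,2)] Let_def m_def[symmetric] e[symmetric] by auto
qed

lemma div2: "(l \<le> p div 2) = (2*l \<le> (p::int))" by presburger
lemma div3: "(p \<le> (2*k) div 3) = (3*p \<le> 2*(k::int))" by presburger
lemma div2b: "(p \<le> (b+k) div 2) = (2*p \<le> b+(k::int))" by presburger


lemma mem1: "(p,l) \<in> Par1 k a b \<longleftrightarrow> b \<ge> 2 \<and> k \<ge> 2*a+3 \<and> a+2 \<le> p \<and> p \<le> a+b \<and> p \<le> k-a-1 \<and> 3*p \<le> 2*k
   \<and> 2*p \<le> b+k \<and> 1 \<le> l \<and> 2*p-k \<le> l \<and> l \<le> p-a-1 \<and> 2*l \<le> p \<and> l \<le> b"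
  by (auto simp: Par1_def div2 div3 div2b)
lemma mem2: "(p,l) \<in> Par2 k a b \<longleftrightarrow> b \<ge> 1 \<and> k \<ge> a+b+1 \<and> b+1 \<le> p \<and> p \<le> a+b \<and> p \<le> k-a
   \<and> 1 \<le> l \<and> p-a \<le> l \<and> l \<le> p-b \<and> 2*l \<le> p \<and> l \<le> b"
  by (auto simp: Par2_def div2)
lemma mem3: "(p,l) \<in> Par3 k a b \<longleftrightarrow> b \<ge> 2 \<and> k \<ge> a+b+1 \<and> 2 \<le> p \<and> p \<le> k-a-1 \<and> p \<le> 2*b-2
   \<and> 1 \<le> l \<and> p-b+1 \<le> l \<and> l \<le> k-a-b \<and> 2*l \<le> p \<and> l \<le> b"
  by (auto simp: Par3_def div2)
lemma mem4: "p \<in> Par4 k a b \<longleftrightarrow> 0 \<le> p \<and> p \<le> a \<and> p \<le> k-a"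
  by (auto simp: Par4_def)
lemma mem5: "p \<in> Par5 k a b \<longleftrightarrow> k \<ge> 2*a+2 \<and> a+1 \<le> p \<and> p \<le> a+b \<and> 2*p \<le> k"
  by (auto simp: Par5_def div2)

lemma L1: assumes "k \<ge> 1" "a \<ge> b" "b \<ge> 0" "a + b \<le> k" "l > 0"
  shows "(p-2*l\<ge>0 \<and> p+l\<ge>0 \<and> 2*p-l\<le>k \<and> G k a b p l \<noteq> 0) \<longleftrightarrow> (p,l)\<in>Par1 k a b \<or> (p,l)\<in>Par2 k a b \<or> (p,l)\<in>Par3 k a b"
  (is "?L \<longleftrightarrow> ?R")
proof -
  have gz: "G k a b p l \<noteq> 0 \<longleftrightarrow> 2*l \<le> p \<and> p \<le> a+b \<and> l \<le> b \<and> a+b+l \<le> k \<and> 2*p-l \<le> k \<and> a+p \<le> k"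
    by (rule G_nz_pos) (use assms in auto)
  show ?thesis
proof
  assume L: ?L
  then have h: "2*l \<le> p" "p \<le> a+b" "l \<le> b" "a+b+l \<le> k" "2*p-l \<le> k" "a+p \<le> k"
    using gz assms by auto
  consider "l \<le> p-a-1" | "p-a \<le> l" "l \<le> p-b" | "p-b+1 \<le> l" by linarith
  then show ?R
  proof cases
    case 1 then have "(p,l) \<in> Par1 k a b" unfolding mem1 using h assms by linarith
    then show ?thesis by simp
  next
    case 2 then have "(p,l) \<in> Par2 k a b" unfolding mem2 using h assms by linarith
    then show ?thesis by simp
  next
    case 3 then have "(p,l) \<in> Par3 k a b" unfolding mem3 using h assms by linarith
    then show ?thesis by simp
  qed
next
  assume ?R
  then have h: "2*l \<le> p \<and> p \<le> a+b \<and> l \<le> b \<and> a+b+l \<le> k \<and> 2*p-l \<le> k \<and> a+p \<le> k"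
    unfolding mem1 mem2 mem3 using assms by linarith
  then show ?L using gz assms by auto
qed
qed


lemma L0: assumes "k \<ge> 1" "a \<ge> b" "b \<ge> 0" "a + b \<le> k"
  shows "(p\<ge>0 \<and> 2*p\<le>k \<and> G k a b p 0 \<noteq> 0) \<longleftrightarrow> p \<in> Par4 k a b \<or> p \<in> Par5 k a b"
proof -
  have gz: "G k a b p 0 \<noteq> 0 \<longleftrightarrow> 2*0 \<le> p \<and> p \<le> a+b \<and> 0 \<le> b \<and> a+b+0 \<le> k \<and> 2*p-0 \<le> k \<and> a+p \<le> k"
    by (rule G_nz_pos) (use assms in auto)
  show ?thesis unfolding gz mem4 mem5 using assms by linarith
qed

lemma kmn_neg: assumes "l \<le> 0" "a \<ge> b"
  shows "kmn a b p l = max (a+b-l) (max (2*p-l) (a+p-l))"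
proof -
  define M where "M = max (a+b-l) (max (2*p-l) (a+p-l))"
  have m1: "a+b-l \<le> M" "2*p-l \<le> M" "a+p-l \<le> M" by (simp_all add: M_def)
  have k1: "a+b+p-(p+l) \<le> kmn a b p l"
    unfolding kmn_def by (rule max.coboundedI2, rule max.coboundedI2, rule max.coboundedI2, rule max.coboundedI2, rule max.coboundedI2, rule max.cobounded1)
  have k2: "(p-2*l)+(p+l) \<le> kmn a b p l"
    unfolding kmn_def by (rule max.coboundedI2, rule max.coboundedI2, rule max.cobounded1)
  have k3: "a+b+p-l-b \<le> kmn a b p l"
    unfolding kmn_def by (rule max.coboundedI2, rule max.coboundedI2, rule max.coboundedI2, rule max.coboundedI2, rule max.coboundedI2, rule max.coboundedI2, rule max.cobounded1)
  have "kmn a b p l \<le> M" unfolding kmn_def max.bounded_iff using m1 assms by linarith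
  moreover have "M \<le> kmn a b p l" unfolding M_def max.bounded_iff using k1 k2 k3 by linarith
  ultimately show ?thesis unfolding M_def by simp
qed

lemma Gsym: assumes "l \<ge> 0" "a \<ge> b"
  shows "G k a b (p-l) (-l) = G k a b p l"
proof -
  have e1: "kmn a b (p-l) (-l) = kmn a b p l"
  proof -
    have "kmn a b (p-l) (-l) = max (a+b-(-l)) (max (2*(p-l)-(-l)) (a+(p-l)-(-l)))"
      by (rule kmn_neg) (use assms in auto)
    then show ?thesis unfolding kmn_pos[OF assms] by (simp add: algebra_simps)
  qed
  have e2: "min (a+b+(p-l)) (a+b+(p-l)-(-l)) = min (a+b+p) (a+b+p-l)" using assms by simp
  show ?thesis unfolding G_def Let_def e1 e2 by simp
qed

lemma G_val: assumes "l \<ge> 0" "a \<ge> b" "2*l \<le> p" "p \<le> a+b" "l \<le> b" "a+b+l \<le> k" "2*p-l \<le> k" "a+p \<le> k"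
  shows "G k a b p l = min (a+b+p-l) k - max (a+b+l) (max (2*p-l) (a+p)) + 1"
  unfolding G_pos[OF assms(1,2)] Let_def using assms by (simp add: max.bounded_iff)

lemma MP: assumes "k \<ge> 1" "a \<ge> b" "b \<ge> 0" "a + b \<le> k" "(p,l) \<in> Par1 k a b \<union> Par2 k a b \<union> Par3 k a b"
  shows "G k a b p l = Mfun k a b p l"
proof -
  from assms(5) consider "(p,l) \<in> Par1 k a b" | "(p,l) \<in> Par2 k a b" | "(p,l) \<in> Par3 k a b" by blast
  then show ?thesis
  proof cases
    case 1
    then have h: "b \<ge> 2 \<and> k \<ge> 2*a+3 \<and> a+2 \<le> p \<and> p \<le> a+b \<and> p \<le> k-a-1 \<and> 3*p \<le> 2*k
   \<and> 2*p \<le> b+k \<and> 1 \<le> l \<and> 2*p-k \<le> l \<and> l \<le> p-a-1 \<and> 2*l \<le> p \<and> l \<le> b" by (simp add: mem1)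
    have e: "max (a+b+l) (max (2*p-l) (a+p)) = 2*p-l" "max (p-b) l = p-b" "max (p-a) l = p-a"
      using h assms by (simp_all add: max_def)
    show ?thesis using h assms by (subst G_val) (simp_all add: Mfun_def e min.commute)
  next
    case 2
    then have h: "b \<ge> 1 \<and> k \<ge> a+b+1 \<and> b+1 \<le> p \<and> p \<le> a+b \<and> p \<le> k-a
   \<and> 1 \<le> l \<and> p-a \<le> l \<and> l \<le> p-b \<and> 2*l \<le> p \<and> l \<le> b" by (simp add: mem2)
    have e: "max (a+b+l) (max (2*p-l) (a+p)) = a+p" "max (p-b) l = p-b" "max (p-a) l = l"
      using h assms by (simp_all add: max_def)
    show ?thesis using h assms by (subst G_val) (simp_all add: Mfun_def e min.commute)
  next
    case 3
    then have h: "b \<ge> 2 \<and> k \<ge> a+b+1 \<and> 2 \<le> p \<and> p \<le> k-a-1 \<and> p \<le> 2*b-2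
   \<and> 1 \<le> l \<and> p-b+1 \<le> l \<and> l \<le> k-a-b \<and> 2*l \<le> p \<and> l \<le> b" by (simp add: mem3)
    have e: "max (a+b+l) (max (2*p-l) (a+p)) = a+b+l" "max (p-b) l = l" "max (p-a) l = l"
      using h assms by (simp_all add: max_def)
    show ?thesis using h assms by (subst G_val) (simp_all add: Mfun_def e min.commute)
  qed
qed

lemma MD: assumes "k \<ge> 1" "a \<ge> b" "b \<ge> 0" "a + b \<le> k" "p \<in> Par4 k a b \<union> Par5 k a b"
  shows "G k a b p 0 = Mfun k a b p 0"
proof -
  from assms(5) consider "p \<in> Par4 k a b" "p \<le> b" | "p \<in> Par4 k a b" "p > b" | "p \<in> Par5 k a b" by force
  then show ?thesis
  proof cases
    case 1
    then have h: "0 \<le> p \<and> p \<le> a \<and> p \<le> k-a" by (simp add: mem4)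
    have e: "max (a+b+0) (max (2*p-0) (a+p)) = a+b" "max (p-b) 0 = 0" "max (p-a) 0 = 0"
      using h 1 assms by (simp_all add: max_def)
    show ?thesis using h 1 assms by (subst G_val) (simp_all add: Mfun_def e min.commute)
  next
    case 2
    then have h: "0 \<le> p \<and> p \<le> a \<and> p \<le> k-a" by (simp add: mem4)
    have e: "max (a+b+0) (max (2*p-0) (a+p)) = a+p" "max (p-b) 0 = p-b" "max (p-a) 0 = 0"
      using h 2 assms by (simp_all add: max_def)
    show ?thesis using h 2 assms by (subst G_val) (simp_all add: Mfun_def e min.commute)
  next
    case 3
    then have h: "k \<ge> 2*a+2 \<and> a+1 \<le> p \<and> p \<le> a+b \<and> 2*p \<le> k" by (simp add: mem5)
    have e: "max (a+b+0) (max (2*p-0) (a+p)) = 2*p" "max (p-b) 0 = p-b" "max (p-a) 0 = p-a"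
      using h assms by (simp_all add: max_def)
    show ?thesis using h assms by (subst G_val) (simp_all add: Mfun_def e min.commute)
  qed
qed


lemma nonint: assumes "\<not> (3::int) dvd (y - x)"
  shows "fusion_mult k (a,b) (b,a) (x,y) = 0"
proof -
  have "calA (a,b) (b,a) (x,y) \<notin> \<int>"
  proof
    assume "calA (a,b) (b,a) (x,y) \<in> \<int>"
    then obtain n where n: "calA (a,b) (b,a) (x,y) = of_int n" by (auto elim: Ints_cases)
    have "(of_int (3*n) :: rat) = of_int (3*(a+b)+x+2*y)"
      using n unfolding calA_def by (simp add: field_simps)
    then have "3*n = 3*(a+b)+x+2*y" by (simp only: of_int_eq_iff)
    then have "y - x = 3*(y-n+a+b)" by (simp add: algebra_simps)
    then have "(3::int) dvd (y-x)" by (rule dvdI)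
    with assms show False by simp
  qed
  then show ?thesis by (simp add: fusion_mult_def Let_def)
qed

lemma rep: assumes "(3::int) dvd (y - x)" shows "\<exists>p l. (x,y) = (p-2*l, p+l)"
proof -
  obtain t where "y - x = 3*t" using assms by (auto elim: dvdE)
  then have "(x,y) = ((y-t)-2*t, (y-t)+t)" by simp
  then show ?thesis by blast
qed

lemma Tpair_mem: "(p-2*l, p+l) \<in> Tpair P \<longleftrightarrow> (p,l) \<in> P \<or> (p-l,-l) \<in> P"
proof
  assume "(p-2*l, p+l) \<in> Tpair P"
  then consider p' l' where "(p-2*l, p+l) = (p'-2*l', p'+l')" "(p',l') \<in> P"
    | p' l' where "(p-2*l, p+l) = (p'+l', p'-2*l')" "(p',l') \<in> P"
    unfolding Tpair_def by blast
  then show "(p,l) \<in> P \<or> (p-l,-l) \<in> P"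
  proof cases
    case 1
    then have "p' = p" "l' = l" by auto
    with 1 show ?thesis by simp
  next
    case 2
    then have "p' = p - l" "l' = -l" by auto
    with 2 show ?thesis by simp
  qed
next
  assume "(p,l) \<in> P \<or> (p-l,-l) \<in> P"
  then show "(p-2*l, p+l) \<in> Tpair P"
  proof
    assume "(p,l) \<in> P" then show ?thesis unfolding Tpair_def by blast
  next
    assume h: "(p-l,-l) \<in> P"
    have "(p-2*l, p+l) = ((p-l)+(-l), (p-l)-2*(-l))" by simp
    with h show ?thesis unfolding Tpair_def by blast
  qed
qed

lemma Tdiag_mem: "(p-2*l, p+l) \<in> Tdiag P \<longleftrightarrow> l = 0 \<and> p \<in> P"
  unfolding Tdiag_def by auto

lemma Tpair_dvd: "\<nu> \<in> Tpair P \<Longrightarrow> (3::int) dvd (snd \<nu> - fst \<nu>)"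
  unfolding Tpair_def by auto
lemma Tdiag_dvd: "\<nu> \<in> Tdiag P \<Longrightarrow> (3::int) dvd (snd \<nu> - fst \<nu>)"
  unfolding Tdiag_def by auto

lemma pos123: "(p,l) \<in> Par1 k a b \<union> Par2 k a b \<union> Par3 k a b \<Longrightarrow> l \<ge> 1"
  by (auto simp: mem1 mem2 mem3)

lemma range_mem: "(p-2*l, p+l) \<in> fusion_range k (a,b) (b,a) \<longleftrightarrow>
   (p-2*l\<ge>0 \<and> p+l\<ge>0 \<and> 2*p-l\<le>k \<and> G k a b p l \<noteq> 0)"
  unfolding fusion_range_def Pplus_def by (auto simp: fm_eq)


lemma pos1: "(p,l) \<in> Par1 k a b \<Longrightarrow> l \<ge> 1" by (simp add: mem1)
lemma pos2: "(p,l) \<in> Par2 k a b \<Longrightarrow> l \<ge> 1" by (simp add: mem2)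
lemma pos3: "(p,l) \<in> Par3 k a b \<Longrightarrow> l \<ge> 1" by (simp add: mem3)
lemma d12: "(p,l) \<in> Par1 k a b \<Longrightarrow> (p,l) \<in> Par2 k a b \<Longrightarrow> False" by (simp add: mem1 mem2)
lemma d13: "b \<le> a \<Longrightarrow> (p,l) \<in> Par1 k a b \<Longrightarrow> (p,l) \<in> Par3 k a b \<Longrightarrow> False" by (simp add: mem1 mem3)
lemma d23: "(p,l) \<in> Par2 k a b \<Longrightarrow> (p,l) \<in> Par3 k a b \<Longrightarrow> False" by (simp add: mem2 mem3)
lemma d45: "p \<in> Par4 k a b \<Longrightarrow> p \<in> Par5 k a b \<Longrightarrow> False" by (simp add: mem4 mem5)

lemma KEY: assumes H: "k \<ge> 1" "a \<ge> b" "b \<ge> 0" "a + b \<le> k"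
  shows "(p-2*l, p+l) \<in> fusion_range k (a,b) (b,a) \<longleftrightarrow> (p-2*l, p+l) \<in> T1 k a b \<union> T2 k a b \<union> T3 k a b \<union> T4 k a b \<union> T5 k a b"
proof -
  let ?P = "Par1 k a b \<union> Par2 k a b \<union> Par3 k a b"
  have U: "(p-2*l, p+l) \<in> T1 k a b \<union> T2 k a b \<union> T3 k a b \<union> T4 k a b \<union> T5 k a b \<longleftrightarrow>
     ((p,l) \<in> ?P \<or> (p-l,-l) \<in> ?P \<or> (l = 0 \<and> p \<in> Par4 k a b \<union> Par5 k a b))"
    unfolding T1_def T2_def T3_def T4_def T5_def Un_iff Tpair_mem Tdiag_mem by blast
  consider "l > 0" | "l = 0" | "l < 0" by linarith
  then show ?thesis
  proof cases
    case 1
    have n: "(p-l,-l) \<notin> ?P" using pos123[of "p-l" "-l"] 1 by force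
    have l1: "(p-2*l\<ge>0 \<and> p+l\<ge>0 \<and> 2*p-l\<le>k \<and> G k a b p l \<noteq> 0) \<longleftrightarrow> (p,l) \<in> ?P"
      using L1[where k=k and a=a and b=b and l=l and p=p, OF H(1) H(2) H(3) H(4) 1] by (simp only: Un_iff disj_assoc)
    show ?thesis unfolding range_mem U using l1 n 1 by auto
  next
    case 2
    have n: "(p,l) \<notin> ?P" "(p-l,-l) \<notin> ?P" using pos123[of p l] pos123[of "p-l" "-l"] 2 by force+
    have l0: "(p\<ge>0 \<and> 2*p\<le>k \<and> G k a b p 0 \<noteq> 0) \<longleftrightarrow> p \<in> Par4 k a b \<or> p \<in> Par5 k a b"
      using L0[where k=k and a=a and b=b and p=p, OF H(1) H(2) H(3) H(4)] .
    show ?thesis unfolding range_mem U using l0 n 2 by auto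
  next
    case 3
    have n: "(p,l) \<notin> ?P" using pos123[of p l] 3 by force
    have g: "G k a b (p-l) (-l) = G k a b p l"
      using Gsym[where l="-l" and p="p-l" and k=k and a=a and b=b] 3 H by simp
    have l1: "((p-l)-2*(-l)\<ge>0 \<and> (p-l)+(-l)\<ge>0 \<and> 2*(p-l)-(-l)\<le>k \<and> G k a b (p-l) (-l) \<noteq> 0) \<longleftrightarrow> (p-l,-l) \<in> ?P"
      using L1[where k=k and a=a and b=b and l="-l" and p="p-l", OF H(1) H(2) H(3) H(4)] 3 by (simp only: Un_iff disj_assoc)
    have e: "(p-2*l\<ge>0 \<and> p+l\<ge>0 \<and> 2*p-l\<le>k) \<longleftrightarrow> ((p-l)-2*(-l)\<ge>0 \<and> (p-l)+(-l)\<ge>0 \<and> 2*(p-l)-(-l)\<le>k)"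
      by auto
    show ?thesis unfolding range_mem U using l1 n 3 e g by auto
  qed
qed

theorem mainTheorem4:
  fixes k a b :: int
  assumes "k \<ge> 1" and "a \<ge> b" and "b \<ge> 0" and "a + b \<le> k"
  shows "fusion_range k (a, b) (b, a) = T1 k a b \<union> T2 k a b \<union> T3 k a b \<union> T4 k a b \<union> T5 k a b
    \<and> disjoint_family_on (Tfam k a b) {1..5}
    \<and> (\<forall>(p, l) \<in> Par1 k a b \<union> Par2 k a b \<union> Par3 k a b.
          fusion_mult k (a, b) (b, a) (p - 2*l, p + l) = of_int (Mfun k a b p l)
        \<and> fusion_mult k (a, b) (b, a) (p + l, p - 2*l) = of_int (Mfun k a b p l))
    \<and> (\<forall>p \<in> Par4 k a b \<union> Par5 k a b.
          fusion_mult k (a, b) (b, a) (p, p) = of_int (Mfun k a b p 0))"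
proof (intro conjI)
  note H = assms
  have dvdT: "\<nu> \<in> T1 k a b \<union> T2 k a b \<union> T3 k a b \<union> T4 k a b \<union> T5 k a b \<Longrightarrow> (3::int) dvd (snd \<nu> - fst \<nu>)" for \<nu>
    unfolding T1_def T2_def T3_def T4_def T5_def using Tpair_dvd Tdiag_dvd by blast
  show "fusion_range k (a, b) (b, a) = T1 k a b \<union> T2 k a b \<union> T3 k a b \<union> T4 k a b \<union> T5 k a b"
  proof (rule set_eqI)
    fix \<nu> :: weight
    obtain x y where xy: "\<nu> = (x,y)" by (cases \<nu>)
    show "\<nu> \<in> fusion_range k (a, b) (b, a) \<longleftrightarrow> \<nu> \<in> T1 k a b \<union> T2 k a b \<union> T3 k a b \<union> T4 k a b \<union> T5 k a b"
    proof (cases "(3::int) dvd (y - x)")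
      case True
      then obtain p l where "(x,y) = (p-2*l, p+l)" using rep by blast
      then show ?thesis using KEY[OF H, of p l] xy by simp
    next
      case False
      then have "\<nu> \<notin> fusion_range k (a, b) (b, a)"
        using nonint[OF False] xy unfolding fusion_range_def by auto
      moreover have "\<nu> \<notin> T1 k a b \<union> T2 k a b \<union> T3 k a b \<union> T4 k a b \<union> T5 k a b"
        using dvdT[of \<nu>] False xy by auto
      ultimately show ?thesis by blast
    qed
  qed
  show "disjoint_family_on (Tfam k a b) {1..5}"
    unfolding disjoint_family_on_def
  proof (intro ballI impI)
    fix m n :: nat assume mn: "m \<in> {1..5}" "n \<in> {1..5}" "m \<noteq> n"
    show "Tfam k a b m \<inter> Tfam k a b n = {}"
    proof (rule ccontr)
      assume "Tfam k a b m \<inter> Tfam k a b n \<noteq> {}"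
      then obtain \<nu> where v: "\<nu> \<in> Tfam k a b m" "\<nu> \<in> Tfam k a b n" by blast
      have "\<nu> \<in> T1 k a b \<union> T2 k a b \<union> T3 k a b \<union> T4 k a b \<union> T5 k a b"
        using v(1) unfolding Tfam_def by (auto split: if_splits)
      then have "(3::int) dvd (snd \<nu> - fst \<nu>)" by (rule dvdT)
      then obtain p l where "(fst \<nu>, snd \<nu>) = (p-2*l, p+l)" using rep by blast
      then have pl: "\<nu> = (p-2*l, p+l)" by simp
      have d13': "(p',l') \<in> Par1 k a b \<Longrightarrow> (p',l') \<in> Par3 k a b \<Longrightarrow> False" for p' l'
        using d13 H(2) by blast
      have mT: "(p-2*l,p+l) \<in> Tfam k a b i \<longleftrightarrow> (if i=1 then (p,l)\<in>Par1 k a b \<or> (p-l,-l)\<in>Par1 k a b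
          else if i=2 then (p,l)\<in>Par2 k a b \<or> (p-l,-l)\<in>Par2 k a b
          else if i=3 then (p,l)\<in>Par3 k a b \<or> (p-l,-l)\<in>Par3 k a b
          else if i=4 then l=0 \<and> p\<in>Par4 k a b else l=0 \<and> p\<in>Par5 k a b)" for i
        by (simp add: Tfam_def T1_def T2_def T3_def T4_def T5_def Tpair_mem Tdiag_mem)
      have m5: "m = 1 \<or> m = 2 \<or> m = 3 \<or> m = 4 \<or> m = 5" "n = 1 \<or> n = 2 \<or> n = 3 \<or> n = 4 \<or> n = 5"
        using mn by auto
      show False using v m5 mn(3) H(2) unfolding pl mT
        by (auto simp: mem1 mem2 mem3 mem4 mem5)
    qed
  qed
  show "\<forall>(p, l) \<in> Par1 k a b \<union> Par2 k a b \<union> Par3 k a b.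
          fusion_mult k (a, b) (b, a) (p - 2*l, p + l) = of_int (Mfun k a b p l)
        \<and> fusion_mult k (a, b) (b, a) (p + l, p - 2*l) = of_int (Mfun k a b p l)"
  proof (intro ballI, clarify)
    fix p l assume pl: "(p,l) \<in> Par1 k a b \<union> Par2 k a b \<union> Par3 k a b"
    have l0: "l \<ge> 0" using pos123[OF pl] by simp
    have g: "G k a b p l = Mfun k a b p l" using MP[OF H pl] .
    have e: "(p + l, p - 2*l) = ((p-l) - 2*(-l), (p-l)+(-l))" by simp
    show "fusion_mult k (a, b) (b, a) (p - 2*l, p + l) = of_int (Mfun k a b p l)
        \<and> fusion_mult k (a, b) (b, a) (p + l, p - 2*l) = of_int (Mfun k a b p l)"
      unfolding e fm_eq Gsym[OF l0 H(2)] g by simp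
  qed
  show "\<forall>p \<in> Par4 k a b \<union> Par5 k a b.
          fusion_mult k (a, b) (b, a) (p, p) = of_int (Mfun k a b p 0)"
  proof
    fix p assume p: "p \<in> Par4 k a b \<union> Par5 k a b"
    have e: "(p, p) = (p - 2*0, p+0)" by simp
    show "fusion_mult k (a, b) (b, a) (p, p) = of_int (Mfun k a b p 0)"
      unfolding e fm_eq MD[OF H p] ..
  qed
qed

end
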